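(* Let $k\ge r\ge 3$ and $t\ge0$ be integers and let $\pi\in\mathbb{C}(k,r)$ be a partition whose largest odd part is $2t+1$. Then: (1) if there is a part $2t+2$ with mark $2$ in $GG(\pi)$, then this part is of starting type $s_0$ or $s_2$; (2) if there is a part $2t+4$ with mark $2$ in $GG(\pi)$, then this part is of starting type $s_3$.
   Context: A partition $\pi=(\pi_1,\dots,\pi_\ell)$ is a finite non-increasing sequence of positive integers; "$a$ occurs in $\pi$" means $a=\pi_i$ for some $i$. Göllnitz–Gordon marking: $GG(\pi)$ assigns a positive integer (mark) to each part, processing the parts from smallest to largest; $\pi_i$ receives the smallest positive integer different from the marks of all parts $\pi_g$ with $g>i$ and $\pi_i-\pi_g\le 2$, where $\pi_i-\pi_g<2$ is required when $\pi_i$ is odd. An "$r$-marked part $a$" is a part equal to $a$ with mark $r$. $N_i(\pi)$ is the number of parts with mark $i$; $\pi^{(i)}_1\ge\dots\ge\pi^{(i)}_{N_i(\pi)}$ are the parts with mark $i$, with $\pi^{(i)}_0=+\infty$. $\mathbb{C}(k,r)$: partitions with (i) no odd part repeated; (ii) $\pi_i\ge\pi_{i+k-1}+2$ for $1\le i\le\ell-k+1$, strict if $\pi_i$ even; (iii) at most $r-1$ parts $\le 2$. Starting types: for $\pi\in\mathbb{C}(k,r)$ with $N_2=N_2(\pi)\ge1$, let $l$ be the largest integer in $\{0,\dots,N_2\}$ such that no odd part of $\pi$ is $\ge\pi^{(2)}_l$; for $l<i\le N_2$, $\pi^{(2)}_i$ has type $s_{-1}$. For $b=1,\dots,l$ in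 increasing order, type and auxiliary $\sigma_b$: for $b=1$: Case 1: 1-marked part $\pi^{(2)}_1-1$ exists and $\pi^{(2)}_1+2$ does not occur: type $s_0$, $\sigma_1=\pi^{(2)}_1-1$; Case 2: 1-marked $\pi^{(2)}_1-2$ exists and $\pi^{(2)}_1+2$ does not occur: type $s_1$, $\sigma_1=\pi^{(2)}_1-2$; Case 3: 1-marked $\pi^{(2)}_1+2$ exists: type $s_2$, $\sigma_1=\pi^{(2)}_1+2$; Case 4: 1-marked $\pi^{(2)}_1$ exists: type $s_3$, $\sigma_1=\pi^{(2)}_1$. For $2\le b\le l$: Case 1: 1-marked $\pi^{(2)}_b-1$ exists and, if a 1-marked $\pi^{(2)}_b+2$ exists, $\sigma_{b-1}=\pi^{(2)}_b+2$: type $s_0$, $\sigma_b=\pi^{(2)}_b-1$; Case 2: same with $\pi^{(2)}_b-2$: type $s_1$, $\sigma_b=\pi^{(2)}_b-2$; Case 3: 1-marked $\pi^{(2)}_b+2$ exists and $\sigma_{b-1}\ne\pi^{(2)}_b+2$: type $s_2$, $\sigma_b=\pi^{(2)}_b+2$; Case 4: 1-marked $\pi^{(2)}_b$ exists: type $s_3$, $\sigma_b=\pi^{(2)}_b$. *)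

theory Defs
  imports Main
begin

text \<open>A partition is a list of positive integers in non-increasing order.
  Index i (0-based) in the list corresponds to \<pi>_(i+1) in the paper.\<close>

definition is_partition :: "nat list \<Rightarrow> bool" where
  "is_partition \<pi> \<longleftrightarrow> sorted (rev \<pi>) \<and> (\<forall>p\<in>set \<pi>. 0 < p)"

text \<open>For \<pi> = a # rest (a the largest part), all parts
  of rest have larger index; a gets the least positive integer different from the
  marks of the parts g of rest with a - g \<le> 2 (a - g < 2 if a is odd).\<close>

fun gg_marks :: "nat list \<Rightarrow> nat list" where
  "gg_marks [] = []"
| "gg_marks (a # rest) =
     (let ms = gg_marks rest;
          forb = {ms ! j | j. j < length rest \<and> a - rest ! j \<le> 2 \<and>
                               (odd a \<longrightarrow> a - rest ! j < 2)}
      in (LEAST m. 0 < m \<and> m \<notin> forb) # ms)"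

definition mark :: "nat list \<Rightarrow> nat \<Rightarrow> nat" where
  "mark \<pi> i = gg_marks \<pi> ! i"

definition marked_part :: "nat list \<Rightarrow> nat \<Rightarrow> nat \<Rightarrow> bool" where
  "marked_part \<pi> r a \<longleftrightarrow> (\<exists>i < length \<pi>. \<pi> ! i = a \<and> mark \<pi> i = r)"

text \<open>The parts with mark i, in non-increasing order; (parts_mark \<pi> i) ! (b-1) is \<pi>^(i)_b.\<close>
definition parts_mark :: "nat list \<Rightarrow> nat \<Rightarrow> nat list" where
  "parts_mark \<pi> i = [\<pi> ! j. j \<leftarrow> [0..<length \<pi>], mark \<pi> j = i]"

definition N :: "nat list \<Rightarrow> nat \<Rightarrow> nat" where
  "N \<pi> i = length (parts_mark \<pi> i)"

definition Ckr :: "nat \<Rightarrow> nat \<Rightarrow> nat list set" where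
  "Ckr k r = {\<pi>. is_partition \<pi>
     \<and> (\<forall>i j. i < length \<pi> \<and> j < length \<pi> \<and> i \<noteq> j \<and> \<pi> ! i = \<pi> ! j \<longrightarrow> even (\<pi> ! i))
     \<and> (\<forall>i. i + k - 1 < length \<pi> \<longrightarrow>
           \<pi> ! i \<ge> \<pi> ! (i + k - 1) + 2 \<and>
           (even (\<pi> ! i) \<longrightarrow> \<pi> ! i > \<pi> ! (i + k - 1) + 2))
     \<and> length (filter (\<lambda>p. p \<le> 2) \<pi>) \<le> r - 1}"

datatype stype = s_m1 | s0 | s1 | s2 | s3 | no_type

definition p2 :: "nat list \<Rightarrow> nat \<Rightarrow> nat" where
  "p2 \<pi> b = parts_mark \<pi> 2 ! (b - 1)"

text \<open>The integer l: largest l in {0..N_2} such that no odd part is \<ge> \<pi>^(2)_l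
  (with \<pi>^(2)_0 = +\<infinity>).\<close>
definition ell :: "nat list \<Rightarrow> nat" where
  "ell \<pi> = (GREATEST l. l \<le> N \<pi> 2 \<and>
              (l = 0 \<or> (\<forall>p\<in>set \<pi>. odd p \<longrightarrow> p < p2 \<pi> l)))"

text \<open>(type, \<sigma>_b) for b \<ge> 1, computed for b = 1,2,... in increasing order;
  the cases are tried in the order Case 1, 2, 3, 4. Value at 0 is a dummy.\<close>
fun st_sigma :: "nat list \<Rightarrow> nat \<Rightarrow> stype \<times> nat" where
  "st_sigma \<pi> 0 = (no_type, 0)"
| "st_sigma \<pi> (Suc b) =
    (let x = p2 \<pi> (Suc b) in
     if b = 0 then
       (if marked_part \<pi> 1 (x - 1) \<and> x + 2 \<notin> set \<pi> then (s0, x - 1)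
        else if marked_part \<pi> 1 (x - 2) \<and> x + 2 \<notin> set \<pi> then (s1, x - 2)
        else if marked_part \<pi> 1 (x + 2) then (s2, x + 2)
        else if marked_part \<pi> 1 x then (s3, x)
        else (no_type, 0))
     else
       (let \<sigma> = snd (st_sigma \<pi> b) in
        if marked_part \<pi> 1 (x - 1) \<and> (marked_part \<pi> 1 (x + 2) \<longrightarrow> \<sigma> = x + 2) then (s0, x - 1)
        else if marked_part \<pi> 1 (x - 2) \<and> (marked_part \<pi> 1 (x + 2) \<longrightarrow> \<sigma> = x + 2) then (s1, x - 2)
        else if marked_part \<pi> 1 (x + 2) \<and> \<sigma> \<noteq> x + 2 then (s2, x + 2)
        else if marked_part \<pi> 1 x then (s3, x)
        else (no_type, 0)))"

definition start_type :: "nat list \<Rightarrow> nat \<Rightarrow> stype" where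
  "start_type \<pi> b = (if ell \<pi> < b then s_m1 else fst (st_sigma \<pi> b))"

end

theory Submission
  imports Defs
begin



definition cnd :: "nat \<Rightarrow> nat \<Rightarrow> bool" where
  "cnd a g \<longleftrightarrow> a - g \<le> 2 \<and> (odd a \<longrightarrow> a - g < 2)"

lemma gg_len[simp]: "length (gg_marks xs) = length xs"
  by (induction xs) (simp_all add: Let_def)

lemma gg_Suc: "gg_marks (a # rest) ! Suc j = gg_marks rest ! j"
  by (simp add: Let_def)

lemma gg_0: "gg_marks (a # rest) ! 0 = (LEAST m. 0 < m \<and> m \<notin> {gg_marks rest ! j | j. j < length rest \<and> a - rest ! j \<le> 2 \<and> (odd a \<longrightarrow> a - rest ! j < 2)})"
  by (simp add: Let_def)

lemma gg_nth:
  "i < length xs \<Longrightarrow> gg_marks xs ! i =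
     (LEAST m. 0 < m \<and> m \<notin> {gg_marks xs ! j | j. i < j \<and> j < length xs \<and> cnd (xs ! i) (xs ! j)})"
proof (induction xs arbitrary: i)
  case Nil then show ?case by simp
next
  case (Cons a rest)
  show ?case
  proof (cases i)
    case 0
    have "{gg_marks rest ! j | j. j < length rest \<and> a - rest ! j \<le> 2 \<and> (odd a \<longrightarrow> a - rest ! j < 2)}
        = {gg_marks (a # rest) ! j | j. i < j \<and> j < length (a # rest) \<and> cnd ((a # rest) ! i) ((a # rest) ! j)}"
      (is "?A = ?B")
    proof
      show "?A \<subseteq> ?B"
      proof
        fix x assume "x \<in> ?A"
        then obtain j where j: "x = gg_marks rest ! j" "j < length rest" "a - rest ! j \<le> 2 \<and> (odd a \<longrightarrow> a - rest ! j < 2)"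
          by blast
        have "x = gg_marks (a # rest) ! Suc j \<and> i < Suc j \<and> Suc j < length (a # rest) \<and> cnd ((a # rest) ! i) ((a # rest) ! Suc j)"
          using j 0 by (simp only: gg_Suc nth_Cons_Suc nth_Cons_0 cnd_def length_Cons) simp
        then show "x \<in> ?B" by blast
      qed
      show "?B \<subseteq> ?A"
      proof
        fix x assume "x \<in> ?B"
        then obtain j where j: "x = gg_marks (a # rest) ! j" "i < j" "j < length (a # rest)" "cnd ((a # rest) ! i) ((a # rest) ! j)"
          by blast
        obtain j' where j': "j = Suc j'" using j(2) 0 by (cases j) auto
        have "x = gg_marks rest ! j' \<and> j' < length rest \<and> a - rest ! j' \<le> 2 \<and> (odd a \<longrightarrow> a - rest ! j' < 2)"
          using j 0 unfolding j' by (simp only: gg_Suc nth_Cons_Suc nth_Cons_0 cnd_def length_Cons) simp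
        then show "x \<in> ?A" by blast
      qed
    qed
    then show ?thesis using 0 by (simp only: gg_0 nth_Cons_0)
  next
    case (Suc i')
    have i': "i' < length rest" using Cons.prems Suc by simp
    have "{gg_marks rest ! j | j. i' < j \<and> j < length rest \<and> cnd (rest ! i') (rest ! j)}
        = {gg_marks (a # rest) ! j | j. i < j \<and> j < length (a # rest) \<and> cnd ((a # rest) ! i) ((a # rest) ! j)}"
      (is "?A = ?B")
    proof
      show "?A \<subseteq> ?B"
      proof
        fix x assume "x \<in> ?A"
        then obtain j where j: "x = gg_marks rest ! j" "i' < j" "j < length rest" "cnd (rest ! i') (rest ! j)"
          by blast
        have "x = gg_marks (a # rest) ! Suc j \<and> i < Suc j \<and> Suc j < length (a # rest) \<and> cnd ((a # rest) ! i) ((a # rest) ! Suc j)"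
          using j Suc by (simp only: gg_Suc nth_Cons_Suc length_Cons) simp
        then show "x \<in> ?B" by blast
      qed
      show "?B \<subseteq> ?A"
      proof
        fix x assume "x \<in> ?B"
        then obtain j where j: "x = gg_marks (a # rest) ! j" "i < j" "j < length (a # rest)" "cnd ((a # rest) ! i) ((a # rest) ! j)"
          by blast
        obtain j' where j': "j = Suc j'" using j(2) Suc by (cases j) auto
        have "x = gg_marks rest ! j' \<and> i' < j' \<and> j' < length rest \<and> cnd (rest ! i') (rest ! j')"
          using j Suc unfolding j' by (simp only: gg_Suc nth_Cons_Suc length_Cons) simp
        then show "x \<in> ?A" by blast
      qed
    qed
    then show ?thesis using Cons.IH[OF i'] Suc by (simp only: gg_Suc nth_Cons_Suc)
  qed
qed

lemma least_free:
  assumes "finite (S :: nat set)"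
  shows "0 < (LEAST m. 0 < m \<and> m \<notin> S) \<and> (LEAST m. 0 < m \<and> m \<notin> S) \<notin> S"
proof -
  have "finite (insert 0 S)" using assms by simp
  then obtain m where "m \<notin> insert 0 S"
    using ex_new_if_finite[OF infinite_UNIV_nat] by blast
  then have "0 < m \<and> m \<notin> S" by simp
  then show ?thesis by (rule LeastI)
qed

lemma forb_finite:
  "finite {gg_marks xs ! j | j. i < j \<and> j < length xs \<and> cnd (xs ! i) (xs ! j)}"
proof (rule finite_subset)
  show "{gg_marks xs ! j | j. i < j \<and> j < length xs \<and> cnd (xs ! i) (xs ! j)}
        \<subseteq> (\<lambda>j. gg_marks xs ! j) ` {..<length xs}" by blast
  show "finite ((\<lambda>j. gg_marks xs ! j) ` {..<length xs})" by (rule finite_imageI) simp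
qed

lemma mark_free:
  assumes "i < length xs"
  shows "0 < mark xs i \<and> mark xs i \<notin> {gg_marks xs ! j | j. i < j \<and> j < length xs \<and> cnd (xs ! i) (xs ! j)}"
  unfolding mark_def gg_nth[OF assms] by (rule least_free[OF forb_finite])

lemma F1:
  assumes "i < j" "j < length xs" "cnd (xs ! i) (xs ! j)"
  shows "mark xs i \<noteq> mark xs j"
proof
  assume eq: "mark xs i = mark xs j"
  have i: "i < length xs" using assms by simp
  have "mark xs j \<in> {gg_marks xs ! j | j. i < j \<and> j < length xs \<and> cnd (xs ! i) (xs ! j)}"
    unfolding mark_def using assms by blast
  then show False using mark_free[OF i] eq by simp
qed

lemma F2:
  assumes "i < length xs" "0 < m" "m < mark xs i"
  shows "\<exists>j. i < j \<and> j < length xs \<and> cnd (xs ! i) (xs ! j) \<and> mark xs j = m"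
proof (rule ccontr)
  assume na: "\<not> ?thesis"
  have "m \<notin> {gg_marks xs ! j | j. i < j \<and> j < length xs \<and> cnd (xs ! i) (xs ! j)}"
  proof
    assume "m \<in> {gg_marks xs ! j | j. i < j \<and> j < length xs \<and> cnd (xs ! i) (xs ! j)}"
    then obtain j where "m = gg_marks xs ! j" "i < j" "j < length xs" "cnd (xs ! i) (xs ! j)" by blast
    then show False using na unfolding mark_def by blast
  qed
  with assms(2) have "0 < m \<and> m \<notin> {gg_marks xs ! j | j. i < j \<and> j < length xs \<and> cnd (xs ! i) (xs ! j)}"
    by (rule conjI)
  then have "mark xs i \<le> m" unfolding mark_def gg_nth[OF assms(1)] by (rule Least_le)
  then show False using assms(3) by simp
qed

lemma mark_pos: "i < length xs \<Longrightarrow> 0 < mark xs i"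
  using mark_free by blast

lemma sorted_desc:
  assumes "is_partition xs" "i \<le> j" "j < length xs"
  shows "xs ! j \<le> xs ! i"
proof -
  have sw: "sorted_wrt (\<lambda>x y. y \<le> x) xs" using assms(1) unfolding is_partition_def
    by (simp add: sorted_wrt_rev)
  show ?thesis
  proof (cases "i = j")
    case True then show ?thesis by simp
  next
    case False
    then have "i < j" using assms(2) by simp
    from sorted_wrt_nth_less[OF sw this assms(3)] show ?thesis .
  qed
qed

lemma idx_less:
  assumes "is_partition xs" "i < length xs" "xs ! i > xs ! j"
  shows "i < j"
proof (rule ccontr)
  assume "\<not> i < j"
  then have "j \<le> i" by simp
  then have "xs ! i \<le> xs ! j" using sorted_desc[OF assms(1) _ assms(2)] by blast
  then show False using assms(3) by simp
qed

lemma mp_iff: "marked_part xs 1 a \<longleftrightarrow> (\<exists>i < length xs. xs ! i = a \<and> mark xs i = 1)"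
  unfolding marked_part_def by (rule refl)

lemma concat_map_if_single:
  "concat (map (\<lambda>j. if P j then [f j] else []) ys) = map f (filter P ys)"
  by (induction ys) simp_all

lemma set_parts_mark: "x \<in> set (parts_mark xs c) \<Longrightarrow> \<exists>i < length xs. xs ! i = x \<and> mark xs i = c"
proof -
  have "parts_mark xs c = map (\<lambda>j. xs ! j) (filter (\<lambda>j. mark xs j = c) [0..<length xs])"
    unfolding parts_mark_def by (simp add: concat_map_if_single)
  then show "x \<in> set (parts_mark xs c) \<Longrightarrow> ?thesis" by auto
qed

lemma p2_mem:
  assumes "1 \<le> b" "b \<le> N xs 2"
  shows "\<exists>i < length xs. xs ! i = p2 xs b \<and> mark xs i = 2"
proof -
  have "b - 1 < length (parts_mark xs 2)" using assms unfolding N_def by simp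
  then have "p2 xs b \<in> set (parts_mark xs 2)"
    unfolding p2_def by (rule nth_mem)
  then show ?thesis by (rule set_parts_mark)
qed

lemma ell_ge:
  assumes "1 \<le> b" "b \<le> N xs 2" "\<forall>p\<in>set xs. odd p \<longrightarrow> p < p2 xs b"
  shows "b \<le> ell xs"
  unfolding ell_def
  by (rule Greatest_le_nat[where b = "N xs 2"]) (use assms in auto)

theorem corollary2p11:
  fixes k r t :: nat and \<pi> :: "nat list"
  assumes "3 \<le> r" and "r \<le> k"
    and "\<pi> \<in> Ckr k r"
    and "2 * t + 1 \<in> set \<pi>" and "\<forall>p\<in>set \<pi>. odd p \<longrightarrow> p \<le> 2 * t + 1"
  shows "(\<forall>b. 1 \<le> b \<and> b \<le> N \<pi> 2 \<and> p2 \<pi> b = 2 * t + 2 \<longrightarrow>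
             start_type \<pi> b \<in> {s0, s2})
       \<and> (\<forall>b. 1 \<le> b \<and> b \<le> N \<pi> 2 \<and> p2 \<pi> b = 2 * t + 4 \<longrightarrow>
             start_type \<pi> b = s3)"
proof -
  have P: "is_partition \<pi>" using assms(3) unfolding Ckr_def by simp
  have D: "\<And>i j. i < length \<pi> \<Longrightarrow> j < length \<pi> \<Longrightarrow> i \<noteq> j \<Longrightarrow> \<pi> ! i = \<pi> ! j \<Longrightarrow> even (\<pi> ! i)"
    using assms(3) unfolding Ckr_def by blast
  obtain iT where iT: "iT < length \<pi>" "\<pi> ! iT = 2 * t + 1"
    using assms(4) by (metis in_set_conv_nth)
  have below: "\<pi> ! j = 2 * t" if "iT < j" "j < length \<pi>" "cnd (\<pi> ! iT) (\<pi> ! j)" for j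
  proof -
    have "\<pi> ! j \<le> 2 * t + 1" using sorted_desc[OF P, of iT j] that iT by simp
    moreover have "\<pi> ! j \<noteq> 2 * t + 1" using D[of iT j] that iT by auto
    moreover have "2 * t + 1 - \<pi> ! j < 2" using that(3) iT unfolding cnd_def by simp
    ultimately show ?thesis by simp
  qed
  have K0: "\<not> marked_part \<pi> 1 (2 * t + 2)"
  proof
    assume "marked_part \<pi> 1 (2 * t + 2)"
    then obtain i where i: "i < length \<pi>" "\<pi> ! i = 2 * t + 2" "mark \<pi> i = 1"
      unfolding marked_part_def by auto
    have iiT: "i < iT" using idx_less[OF P i(1)] i iT by simp
    show False
    proof (cases "mark \<pi> iT = 1")
      case True
      then show False using F1[OF iiT iT(1)] i iT by (simp add: cnd_def)
    next
      case False
      then have "1 < mark \<pi> iT" using mark_pos[OF iT(1)] by simp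
      then obtain j where j: "iT < j" "j < length \<pi>" "cnd (\<pi> ! iT) (\<pi> ! j)" "mark \<pi> j = 1"
        using F2[OF iT(1), of 1] by auto
      have "\<pi> ! j = 2 * t" using below j by simp
      then show False using F1[of i j \<pi>] j i iiT by (simp add: cnd_def)
    qed
  qed
  have K1: "mark \<pi> iT = 1" if mp2h: "marked_part \<pi> 2 (2 * t + 2)"
  proof (rule ccontr)
    assume ne: "mark \<pi> iT \<noteq> 1"
    obtain i where i: "i < length \<pi>" "\<pi> ! i = 2 * t + 2" "mark \<pi> i = 2"
      using mp2h unfolding marked_part_def by auto
    have iiT: "i < iT" using idx_less[OF P i(1)] i iT by simp
    have "1 < mark \<pi> iT" using ne mark_pos[OF iT(1)] by simp
    show False
    proof (cases "mark \<pi> iT = 2")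
      case True
      then show False using F1[OF iiT iT(1)] i iT by (simp add: cnd_def)
    next
      case False
      then have "2 < mark \<pi> iT" using \<open>1 < mark \<pi> iT\<close> by simp
      then obtain j where j: "iT < j" "j < length \<pi>" "cnd (\<pi> ! iT) (\<pi> ! j)" "mark \<pi> j = 2"
        using F2[OF iT(1), of 2] by auto
      have "\<pi> ! j = 2 * t" using below j by simp
      then show False using F1[of i j \<pi>] j i iiT by (simp add: cnd_def)
    qed
  qed
  have K2: "\<not> marked_part \<pi> 1 (2 * t)" if m1h: "mark \<pi> iT = 1"
  proof
    assume "marked_part \<pi> 1 (2 * t)"
    then obtain j where j: "j < length \<pi>" "\<pi> ! j = 2 * t" "mark \<pi> j = 1"
      unfolding marked_part_def by auto
    have "iT < j" using idx_less[OF P iT(1)] j iT by simp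
    then show False using F1[OF _ j(1)] j iT m1h by (simp add: cnd_def)
  qed
  have K4: "marked_part \<pi> 1 (2 * t + 4)" if "2 * t + 4 \<in> set \<pi>"
  proof -
    define I where "I = {i. i < length \<pi> \<and> \<pi> ! i = 2 * t + 4}"
    have fI: "finite I" unfolding I_def by simp
    have neI: "I \<noteq> {}" using that unfolding I_def by (auto simp: in_set_conv_nth)
    define i where "i = Max I"
    have iI: "i \<in> I" unfolding i_def using fI neI by simp
    have imax: "\<And>j. j \<in> I \<Longrightarrow> j \<le> i" unfolding i_def using fI by simp
    have "mark \<pi> i = 1"
    proof (rule ccontr)
      assume "mark \<pi> i \<noteq> 1"
      then have "1 < mark \<pi> i" using mark_pos[of i \<pi>] iI unfolding I_def by simp
      then obtain j where j: "i < j" "j < length \<pi>" "cnd (\<pi> ! i) (\<pi> ! j)" "mark \<pi> j = 1"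
        using F2[of i \<pi> 1] iI unfolding I_def by auto
      have le: "\<pi> ! j \<le> 2 * t + 4" using sorted_desc[OF P, of i j] j iI unfolding I_def by simp
      have ge: "2 * t + 2 \<le> \<pi> ! j" using j(3) iI unfolding I_def cnd_def by simp
      have n4: "\<pi> ! j \<noteq> 2 * t + 4" using imax[of j] j unfolding I_def by auto
      have n3: "\<pi> ! j \<noteq> 2 * t + 3"
      proof
        assume "\<pi> ! j = 2 * t + 3"
        then have "2 * t + 3 \<in> set \<pi>" using j(2) nth_mem by metis
        then show False using assms(5) by fastforce
      qed
      have "\<pi> ! j = 2 * t + 2" using le ge n4 n3 by simp
      then show False using K0 j unfolding mp_iff by auto
    qed
    then show ?thesis using iI unfolding I_def mp_iff by auto
  qed
  have K5: "\<not> marked_part \<pi> 1 (2 * t + 6)" if m4h: "marked_part \<pi> 1 (2 * t + 4)"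
  proof
    assume "marked_part \<pi> 1 (2 * t + 6)"
    then obtain i where i: "i < length \<pi>" "\<pi> ! i = 2 * t + 6" "mark \<pi> i = 1"
      unfolding marked_part_def by auto
    obtain j where j: "j < length \<pi>" "\<pi> ! j = 2 * t + 4" "mark \<pi> j = 1"
      using m4h unfolding marked_part_def by auto
    have "i < j" using idx_less[OF P i(1)] i j by simp
    then show False using F1[OF _ j(1)] i j by (simp add: cnd_def)
  qed
  have K6: "\<not> marked_part \<pi> 1 (2 * t + 3)"
  proof
    assume "marked_part \<pi> 1 (2 * t + 3)"
    then obtain j where "j < length \<pi>" "\<pi> ! j = 2 * t + 3" unfolding mp_iff by auto
    then have "2 * t + 3 \<in> set \<pi>" by (metis nth_mem)
    then show False using assms(5) by fastforce
  qed
  show ?thesis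
  proof (intro conjI allI impI)
    fix b assume b: "1 \<le> b \<and> b \<le> N \<pi> 2 \<and> p2 \<pi> b = 2 * t + 2"
    have mp2: "marked_part \<pi> 2 (2 * t + 2)" using p2_mem[of b \<pi>] b unfolding marked_part_def by auto
    have m1: "mark \<pi> iT = 1" using K1[OF mp2] .
    have T1: "marked_part \<pi> 1 (2 * t + 1)" using m1 iT unfolding mp_iff by auto
    have N0: "\<not> marked_part \<pi> 1 (2 * t)" using K2[OF m1] .
    have "b \<le> ell \<pi>" using ell_ge[of b \<pi>] b assms(5) by fastforce
    moreover obtain b' where b': "b = Suc b'" using b by (cases b) auto
    ultimately have ne: "\<not> ell \<pi> < Suc b'" by simp
    have x: "p2 \<pi> (Suc b') = 2 * t + 2" using b b' by simp
    have A: "marked_part \<pi> 1 (p2 \<pi> (Suc b') - 1)" using T1 x by simp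
    have B: "\<not> marked_part \<pi> 1 (p2 \<pi> (Suc b') - 2)" using N0 x by simp
    have C: "p2 \<pi> (Suc b') + 2 \<in> set \<pi> \<Longrightarrow> marked_part \<pi> 1 (p2 \<pi> (Suc b') + 2)"
    proof -
      have e: "p2 \<pi> (Suc b') + 2 = 2 * t + 4" using x by simp
      show "p2 \<pi> (Suc b') + 2 \<in> set \<pi> \<Longrightarrow> marked_part \<pi> 1 (p2 \<pi> (Suc b') + 2)"
        unfolding e using K4 by blast
    qed
    have "fst (st_sigma \<pi> (Suc b')) \<in> {s0, s2}"
    proof (cases "b' = 0")
      case True
      then show ?thesis using A B C by (cases "p2 \<pi> (Suc b') + 2 \<in> set \<pi>") (simp_all add: Let_def)
    next
      case False
      then show ?thesis using A B by (simp add: Let_def)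
    qed
    then show "start_type \<pi> b \<in> {s0, s2}" unfolding start_type_def b' using ne by simp
  next
    fix b assume b: "1 \<le> b \<and> b \<le> N \<pi> 2 \<and> p2 \<pi> b = 2 * t + 4"
    have mp2: "marked_part \<pi> 2 (2 * t + 4)" using p2_mem[of b \<pi>] b unfolding marked_part_def by auto
    then obtain i4 where "i4 < length \<pi>" "\<pi> ! i4 = 2 * t + 4" unfolding marked_part_def by auto
    then have "2 * t + 4 \<in> set \<pi>" by (metis nth_mem)
    then have M4: "marked_part \<pi> 1 (2 * t + 4)" using K4 by simp
    have N6: "\<not> marked_part \<pi> 1 (2 * t + 6)" using K5[OF M4] .
    have "b \<le> ell \<pi>" using ell_ge[of b \<pi>] b assms(5) by fastforce
    moreover obtain b' where b': "b = Suc b'" using b by (cases b) auto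
    ultimately have ne: "\<not> ell \<pi> < Suc b'" by simp
    have x: "p2 \<pi> (Suc b') = 2 * t + 4" using b b' by simp
    have A: "\<not> marked_part \<pi> 1 (p2 \<pi> (Suc b') - 1)" 
    proof -
      have e1: "p2 \<pi> (Suc b') - 1 = 2 * t + 3" using x by simp
      show ?thesis unfolding e1 by (rule K6)
    qed
    have B: "\<not> marked_part \<pi> 1 (p2 \<pi> (Suc b') - 2)" using K0 x by simp
    have C: "\<not> marked_part \<pi> 1 (p2 \<pi> (Suc b') + 2)" 
    proof -
      have e1: "p2 \<pi> (Suc b') + 2 = 2 * t + 6" using x by simp
      show ?thesis unfolding e1 by (rule N6)
    qed
    have E: "marked_part \<pi> 1 (p2 \<pi> (Suc b'))" using M4 x by simp
    have "fst (st_sigma \<pi> (Suc b')) = s3"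
    proof (cases "b' = 0")
      case True
      then show ?thesis using A B C E by (simp add: Let_def)
    next
      case False
      then show ?thesis using A B C E by (simp add: Let_def)
    qed
    then show "start_type \<pi> b = s3" unfolding start_type_def b' using ne by simp
  qed
qed

end
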